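(* Let $F$ be a graph with at least two vertices, let $r\ge 3$, let $\mathcal H$ be a Berge-$F$-free $r$-uniform hypergraph, and let $p=|E(F)|$. Define $\mathcal H_1,\mathcal H_2,\mathcal H_3,G_1,G_2,G_3$ as in the context (for an arbitrary choice of the triangles $T_h$). Then: (i) $G_2$ contains no copy of $F$; (ii) with $k=\min\{r-1,|V(F)|-1\}$, $$|E(\mathcal H)|\le (|E(F)|-1)\,\mathcal N(K_3,G_1)+\mathcal N(K_r,G_2)+\frac{|E(G_3)|}{k(r-k)}.$$
   Context: The shadow graph of $\mathcal H$ is the graph on $V(\mathcal H)$ where $xy$ is an edge iff some hyperedge contains $\{x,y\}$. An edge $xy$ of the shadow graph is $q$-heavy if at least $q$ hyperedges of $\mathcal H$ contain $\{x,y\}$, and $q$-light otherwise; "heavy"/"light" mean $2$-heavy/$2$-light. For a hyperedge $h$, its subedges are the pairs inside $h$. $\mathcal H_1$ is the set of hyperedges $h$ containing three vertices forming a triangle $T$ (all pairs inside $h$) such that at least two edges of $T$ are heavy and at least one edge of $T$ is $p$-light; for each $h\in\mathcal H_1$ fix one such triangle $T_h$, and let $G_1$ be the graph formed by the edges of all chosen triangles $T_h$. $\mathcal H_2$ is the set of hyperedges all of whose subedges are $p$-heavy, and $G_2$ is the shadow graph of $\mathcal H_2$. $\mathcal H_3$ consists of all remaining hyperedges, and $G_3$ is the graph formed by the light edges contained in hyperedges of $\mathcal H_3$. $\mathcal N(H,G)$ denotes the number of copies of $H$ in $G$. Berge-$F$: injections $\varphi:V(F)\to V(\mathcal H)$,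 $f:E(F)\to E(\mathcal H)$ with $\{\varphi(x),\varphi(y)\}\subseteq f(xy)$ for each $xy\in E(F)$. *)

theory Defs
  imports Complex_Main
begin

definition pairs_in :: "'a set \<Rightarrow> 'a set set" where
  "pairs_in S = {e. e \<subseteq> S \<and> card e = 2}"

definition edge_mult :: "'a set set \<Rightarrow> 'a set \<Rightarrow> nat" where
  "edge_mult H e = card {h \<in> H. e \<subseteq> h}"

definition heavy :: "nat \<Rightarrow> 'a set set \<Rightarrow> 'a set \<Rightarrow> bool" where
  "heavy q H e \<longleftrightarrow> q \<le> edge_mult H e"

definition shadow :: "'a set set \<Rightarrow> 'a set set" where
  "shadow H = {{x, y} | x y. x \<noteq> y \<and> (\<exists>h\<in>H. {x, y} \<subseteq> h)}"

definition good_triangle :: "'a set set \<Rightarrow> nat \<Rightarrow> 'a set \<Rightarrow> 'a set \<Rightarrow> bool" where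
  "good_triangle H p h T \<longleftrightarrow> T \<subseteq> h \<and> card T = 3 \<and>
     2 \<le> card {e \<in> pairs_in T. heavy 2 H e} \<and> (\<exists>e \<in> pairs_in T. \<not> heavy p H e)"

definition H1 :: "'a set set \<Rightarrow> nat \<Rightarrow> 'a set set" where
  "H1 H p = {h \<in> H. \<exists>T. good_triangle H p h T}"

definition H2 :: "'a set set \<Rightarrow> nat \<Rightarrow> 'a set set" where
  "H2 H p = {h \<in> H. \<forall>e \<in> pairs_in h. heavy p H e}"

definition H3 :: "'a set set \<Rightarrow> nat \<Rightarrow> 'a set set" where
  "H3 H p = H - H1 H p - H2 H p"

definition G1 :: "'a set set \<Rightarrow> nat \<Rightarrow> ('a set \<Rightarrow> 'a set) \<Rightarrow> 'a set set" where
  "G1 H p T = (\<Union>h \<in> H1 H p. pairs_in (T h))"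

definition G2 :: "'a set set \<Rightarrow> nat \<Rightarrow> 'a set set" where
  "G2 H p = shadow (H2 H p)"

definition G3 :: "'a set set \<Rightarrow> nat \<Rightarrow> 'a set set" where
  "G3 H p = {e. \<exists>h \<in> H3 H p. e \<in> pairs_in h \<and> \<not> heavy 2 H e}"

definition copies :: "'b set \<Rightarrow> 'b set set \<Rightarrow> 'a set \<Rightarrow> 'a set set \<Rightarrow> ('a set \<times> 'a set set) set" where
  "copies VF EF V E = {(W, D). W \<subseteq> V \<and> D \<subseteq> E \<and>
      (\<exists>\<phi>. bij_betw \<phi> VF W \<and> D = (\<lambda>e. \<phi> ` e) ` EF)}"

definition num_copies :: "'b set \<Rightarrow> 'b set set \<Rightarrow> 'a set \<Rightarrow> 'a set set \<Rightarrow> nat" where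
  "num_copies VF EF V E = card (copies VF EF V E)"

definition K_V :: "nat \<Rightarrow> nat set" where "K_V n = {0..<n}"
definition K_E :: "nat \<Rightarrow> nat set set" where "K_E n = pairs_in {0..<n}"

definition berge_copy :: "'b set \<Rightarrow> 'b set set \<Rightarrow> 'a set \<Rightarrow> 'a set set \<Rightarrow> bool" where
  "berge_copy VF EF V H \<longleftrightarrow> (\<exists>\<phi> f. inj_on \<phi> VF \<and> \<phi> ` VF \<subseteq> V \<and> inj_on f EF \<and> f ` EF \<subseteq> H \<and>
      (\<forall>e \<in> EF. \<phi> ` e \<subseteq> f e))"

definition is_graph :: "'b set \<Rightarrow> 'b set set \<Rightarrow> bool" where
  "is_graph VF EF \<longleftrightarrow> finite VF \<and> (\<forall>e \<in> EF. e \<subseteq> VF \<and> card e = 2)"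

definition uniform_hypergraph :: "nat \<Rightarrow> 'a set \<Rightarrow> 'a set set \<Rightarrow> bool" where
  "uniform_hypergraph r V H \<longleftrightarrow> finite V \<and> (\<forall>h \<in> H. h \<subseteq> V \<and> card h = r)"

end

theory Submission imports Defs begin

lemma pairs_in_finite: "finite S \<Longrightarrow> finite (pairs_in S)"
  unfolding pairs_in_def by (rule finite_subset[of _ "Pow S"]) auto

lemma pairs_in_doubleton: "x \<in> S \<Longrightarrow> y \<in> S \<Longrightarrow> x \<noteq> y \<Longrightarrow> {x, y} \<in> pairs_in S"
  unfolding pairs_in_def by auto

lemma pairs_in_D: "e \<in> pairs_in S \<Longrightarrow> \<exists>x y. e = {x, y} \<and> x \<noteq> y \<and> x \<in> S \<and> y \<in> S"
  unfolding pairs_in_def by (auto simp: card_2_iff)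

lemma pairs_in_bij:
  assumes "bij_betw \<phi> A B"
  shows "(\<lambda>e. \<phi> ` e) ` pairs_in A = pairs_in B"
proof -
  have bp: "bij_betw (image \<phi>) (Pow A) (Pow B)" using bij_betw_Pow[OF assms] .
  have inj: "inj_on \<phi> A" using assms bij_betw_imp_inj_on by blast
  have cd: "card (\<phi> ` e) = card e" if "e \<subseteq> A" for e
    using inj that by (meson card_image inj_on_subset)
  show ?thesis
  proof
    show "(\<lambda>e. \<phi> ` e) ` pairs_in A \<subseteq> pairs_in B"
      using bp cd unfolding pairs_in_def bij_betw_def by auto
  next
    show "pairs_in B \<subseteq> (\<lambda>e. \<phi> ` e) ` pairs_in A"
    proof
      fix e' assume e': "e' \<in> pairs_in B"
      then have "e' \<in> image \<phi> ` Pow A" using bp unfolding bij_betw_def pairs_in_def by auto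
      then obtain e where e: "e \<subseteq> A" "e' = \<phi> ` e" by auto
      then have "card e = 2" using cd e' unfolding pairs_in_def by auto
      then show "e' \<in> (\<lambda>e. \<phi> ` e) ` pairs_in A" using e unfolding pairs_in_def by auto
    qed
  qed
qed

lemma Kcopy:
  assumes "finite C" "C \<subseteq> V" "card C = n" "pairs_in C \<subseteq> E"
  shows "(C, pairs_in C) \<in> copies (K_V n) (K_E n) V E"
proof -
  obtain \<phi> where "bij_betw \<phi> {0..<card C} C" using ex_bij_betw_nat_finite[OF assms(1)] by blast
  moreover have "(\<lambda>e. \<phi> ` e) ` pairs_in {0..<card C} = pairs_in C"
    using pairs_in_bij calculation by blast
  ultimately show ?thesis using assms
    unfolding copies_def K_V_def K_E_def by (auto intro!: exI[of _ \<phi>])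
qed

lemma copies_finite: "finite V \<Longrightarrow> E \<subseteq> Pow V \<Longrightarrow> finite (copies VF EF V E)"
proof -
  assume a: "finite V" "E \<subseteq> Pow V"
  then have "finite E" by (meson finite_Pow_iff finite_subset)
  have "copies VF EF V E \<subseteq> Pow V \<times> Pow E" unfolding copies_def by auto
  then show ?thesis using a \<open>finite E\<close> by (meson finite_Pow_iff finite_SigmaI finite_subset)
qed

lemma greedy_aux:
  assumes "finite E"
  shows "card E \<le> n \<Longrightarrow> (\<forall>e\<in>E. finite (S e) \<and> n \<le> card (S e)) \<Longrightarrow> \<exists>f. inj_on f E \<and> (\<forall>e\<in>E. f e \<in> S e)"
  using assms
proof (induction E rule: finite_induct)
  case empty
  then show ?case by auto
next
  case (insert x E)
  then obtain f where f: "inj_on f E" "\<forall>e\<in>E. f e \<in> S e" by auto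
  have "card (f ` E) < card (S x)"
    using insert card_image_le[of E f] by auto
  then have "\<not> S x \<subseteq> f ` E" using insert by (meson card_mono leD finite_imageI)
  then obtain y where y: "y \<in> S x" "y \<notin> f ` E" by auto
  have "inj_on (f(x := y)) (insert x E)"
    using f y insert(2) by (auto simp: inj_on_def image_iff)
  moreover have "\<forall>e\<in>insert x E. (f(x := y)) e \<in> S e" using f y insert(2) by auto
  ultimately show ?case by blast
qed

lemma berge_from_heavy:
  assumes "inj_on \<phi> VF" "\<phi> ` VF \<subseteq> V" "finite EF" "finite H"
    and "\<forall>e\<in>EF. heavy (card EF) H (\<phi> ` e)"
  shows "berge_copy VF EF V H"
proof -
  let ?S = "\<lambda>e. {h \<in> H. \<phi> ` e \<subseteq> h}"
  obtain f where f: "inj_on f EF" "\<forall>e\<in>EF. f e \<in> ?S e"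
    using greedy_aux[OF assms(3), of "card EF" ?S] assms(4,5)
    unfolding heavy_def edge_mult_def by auto
  then show ?thesis using assms unfolding berge_copy_def by blast
qed

lemma card2_le: "card {a, b} \<le> 2"
  by (cases "a = b") auto

lemma arith1:
  fixes s k r :: nat
  assumes "s \<le> k" "r - k \<le> s" "k \<le> r" "s \<le> r"
  shows "k * (r - k) \<le> s * (r - s)"
proof -
  have "int (s * (r - s)) = int (k * (r - k)) + (int k - int s) * (int s + int k - int r)"
    using assms by (simp add: of_nat_diff algebra_simps)
  moreover have "(int k - int s) * (int s + int k - int r) \<ge> 0" using assms by auto
  ultimately show ?thesis by linarith
qed

lemma arith2:
  fixes L k r :: nat
  assumes "r * k \<le> 2 * L" "r * (r - k) \<le> 2 * L" "k \<le> r"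
  shows "k * (r - k) \<le> L"
proof (cases "2 * k \<le> r")
  case True
  then have "2 * k * (r - k) \<le> r * (r - k)" by (rule mult_le_mono1)
  then show ?thesis using assms by linarith
next
  case False
  then have "2 * (r - k) \<le> r" by linarith
  then have "2 * (r - k) * k \<le> r * k" by (rule mult_le_mono1)
  then show ?thesis using assms by (simp add: algebra_simps)
qed


lemma H3_light:
  assumes graph: "is_graph VF EF" and VF2: "card VF \<ge> 2" and r3: "r \<ge> 3"
    and unif: "uniform_hypergraph r V H" and nb: "\<not> berge_copy VF EF V H"
    and hH3: "h \<in> H3 H (card EF)"
  shows "min (r - 1) (card VF - 1) * (r - min (r - 1) (card VF - 1))
           \<le> card {e \<in> pairs_in h. \<not> heavy 2 H e}"
proof -
  define p where "p = card EF"
  define k where "k = min (r - 1) (card VF - 1)"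
  define C where "C = (\<lambda>x. {y \<in> h. y = x \<or> heavy 2 H {x, y}})"
  define L where "L = {e \<in> pairs_in h. \<not> heavy 2 H e}"
  have finV: "finite V" using unif unfolding uniform_hypergraph_def by auto
  have HPow: "H \<subseteq> Pow V" using unif unfolding uniform_hypergraph_def by auto
  have finH: "finite H" using finV HPow by (meson finite_Pow_iff finite_subset)
  have hH: "h \<in> H" and hn1: "h \<notin> H1 H p" and hn2: "h \<notin> H2 H p"
    using hH3 unfolding H3_def p_def by auto
  have hV: "h \<subseteq> V" and hr: "card h = r" using hH unif unfolding uniform_hypergraph_def by auto
  have finh: "finite h" using hV finV finite_subset by blast
  have notgood: "\<not> good_triangle H p h S" for S using hn1 hH unfolding H1_def by auto
  obtain e0 where e0: "e0 \<in> pairs_in h" "\<not> heavy p H e0"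
    using hn2 hH unfolding H2_def by auto
  have mult1: "1 \<le> edge_mult H e" if "e \<subseteq> h" for e
  proof -
    have "h \<in> {g \<in> H. e \<subseteq> g}" using that hH by auto
    moreover have "finite {g \<in> H. e \<subseteq> g}" using finH by auto
    ultimately show ?thesis unfolding edge_mult_def
      by (metis One_nat_def Suc_leI card_gt_0_iff empty_iff)
  qed
  have p2: "p \<ge> 2"
  proof -
    have "1 \<le> edge_mult H e0" using mult1 e0(1) unfolding pairs_in_def by auto
    moreover have "edge_mult H e0 < p" using e0(2) unfolding heavy_def by auto
    ultimately show ?thesis by linarith
  qed
  have finVF: "finite VF" and EFsub: "EF \<subseteq> pairs_in VF"
    using graph unfolding is_graph_def pairs_in_def by auto
  have VF3: "card VF \<ge> 3"
  proof (rule ccontr)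
    assume "\<not> 3 \<le> card VF"
    then have c2: "card VF = 2" using VF2 by auto
    have "pairs_in VF \<subseteq> {VF}"
      using c2 finVF card_subset_eq[OF finVF] unfolding pairs_in_def by auto
    then have "card EF \<le> card {VF}" using EFsub by (intro card_mono) auto
    then have "card EF \<le> 1" by simp
    then show False using p2 p_def by auto
  qed
  have heavy_mono: "heavy 2 H e" if "heavy p H e" for e
    using that p2 unfolding heavy_def by auto
  have tri: "\<forall>e\<in>pairs_in {x, y, z}. heavy p H e"
    if "x \<in> h" "y \<in> h" "z \<in> h" "x \<noteq> y" "y \<noteq> z" "x \<noteq> z"
       "heavy 2 H {x, y}" "heavy 2 H {y, z}" for x y z
  proof -
    have sub: "{x, y, z} \<subseteq> h" using that by auto
    have c3: "card {x, y, z} = 3" using that by auto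
    have "{{x, y}, {y, z}} \<subseteq> {e \<in> pairs_in {x, y, z}. heavy 2 H e}"
      using that unfolding pairs_in_def by auto
    moreover have "card {{x, y}, {y, z}} = 2"
      using that by (auto simp: doubleton_eq_iff)
    moreover have "finite {e \<in> pairs_in {x, y, z}. heavy 2 H e}"
      using pairs_in_finite[of "{x,y,z}"] by auto
    ultimately have "2 \<le> card {e \<in> pairs_in {x, y, z}. heavy 2 H e}"
      by (metis card_mono)
    then show ?thesis using notgood[of "{x,y,z}"] sub c3 unfolding good_triangle_def by auto
  qed
  have Csub: "C x \<subseteq> h" for x unfolding C_def by auto
  have Cself: "x \<in> h \<Longrightarrow> x \<in> C x" for x unfolding C_def by auto
  have finC: "finite (C x)" for x using Csub finh finite_subset by blast
  have clique: "heavy p H {y, z}"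
    if cl: "x \<in> h" "3 \<le> card (C x)" "y \<in> C x" "z \<in> C x" "y \<noteq> z" for x y z
  proof -
    have yh: "y \<in> h" and zh: "z \<in> h" using that Csub by auto
    show ?thesis
    proof (cases "y = x")
      case True
      then have "z \<noteq> x" "heavy 2 H {x, z}" using that unfolding C_def by auto
      obtain w where w: "w \<in> C x" "w \<noteq> x" "w \<noteq> z"
      proof -
        have "card {x, z} \<le> 2" by (rule card2_le)
        then have "\<not> C x \<subseteq> {x, z}"
          using cl card_mono[of "{x,z}" "C x"] by auto
        then show ?thesis using that by auto
      qed
      then have "heavy 2 H {w, x}" using Csub unfolding C_def by (auto simp: insert_commute)
      then have "\<forall>e\<in>pairs_in {w, x, z}. heavy p H e"
        using tri[of w x z] w Csub \<open>z \<noteq> x\<close> \<open>heavy 2 H {x, z}\<close> that zh by auto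
      then show ?thesis using True \<open>z \<noteq> x\<close> pairs_in_doubleton[of x "{w,x,z}" z] by auto
    next
      case False
      show ?thesis
      proof (cases "z = x")
        case True
        then have "heavy 2 H {x, y}" using that False unfolding C_def by auto
        obtain w where w: "w \<in> C x" "w \<noteq> x" "w \<noteq> y"
        proof -
          have "card {x, y} \<le> 2" by (rule card2_le)
          then have "\<not> C x \<subseteq> {x, y}"
            using cl card_mono[of "{x,y}" "C x"] by auto
          then show ?thesis using that by auto
        qed
        then have "heavy 2 H {x, w}" using Csub unfolding C_def by auto
        then have "\<forall>e\<in>pairs_in {y, x, w}. heavy p H e"
          using tri[of y x w] w Csub False \<open>heavy 2 H {x, y}\<close> that yh
          by (auto simp: insert_commute)
        then show ?thesis using True False pairs_in_doubleton[of y "{y,x,w}" x]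
          by (auto simp: insert_commute)
      next
        case False2: False
        have "heavy 2 H {y, x}" "heavy 2 H {x, z}"
          using that False False2 unfolding C_def by (auto simp: insert_commute)
        then have "\<forall>e\<in>pairs_in {y, x, z}. heavy p H e"
          using tri[of y x z] that yh zh False False2 by auto
        then show ?thesis using pairs_in_doubleton[of y "{y,x,z}" z] that by auto
      qed
    qed
  qed
  have closed: "\<not> heavy 2 H {a, b}" if "x0 \<in> h" "a \<in> C x0" "b \<in> h" "b \<notin> C x0" for x0 a b
  proof
    assume hab: "heavy 2 H {a, b}"
    show False
    proof (cases "a = x0")
      case True
      then show False using hab that unfolding C_def by auto
    next
      case False
      then have h0a: "heavy 2 H {x0, a}" and ah: "a \<in> h" using that unfolding C_def by auto
      have "b \<noteq> x0" "b \<noteq> a" using that Cself by auto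
      then have "\<forall>e\<in>pairs_in {x0, a, b}. heavy p H e"
        using tri[of x0 a b] that ah False hab h0a by auto
      then have "heavy 2 H {x0, b}" using heavy_mono pairs_in_doubleton[of x0 "{x0,a,b}" b] \<open>b \<noteq> x0\<close>
        by auto
      then show False using that unfolding C_def by auto
    qed
  qed
  have Csize: "card (C x) \<le> k" if xh: "x \<in> h" for x
  proof -
    have "card (C x) \<le> r - 1"
    proof (rule ccontr)
      assume "\<not> card (C x) \<le> r - 1"
      then have "card (C x) = r" using card_mono[OF finh Csub[of x]] hr by auto
      then have Ch: "C x = h" using card_subset_eq[OF finh Csub[of x]] hr by auto
      have "\<forall>e\<in>pairs_in h. heavy p H e"
      proof
        fix e assume "e \<in> pairs_in h"
        then obtain y z where "e = {y, z}" "y \<noteq> z" "y \<in> h" "z \<in> h" using pairs_in_D by blast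
        then show "heavy p H e" using clique[of x y z] Ch r3 hr xh by auto
      qed
      then have "h \<in> H2 H p" using hH unfolding H2_def by auto
      then show False using hn2 by auto
    qed
    moreover have "card (C x) \<le> card VF - 1"
    proof (rule ccontr)
      assume "\<not> card (C x) \<le> card VF - 1"
      then have le: "card VF \<le> card (C x)" by auto
      obtain \<phi> where \<phi>: "\<phi> ` VF \<subseteq> C x" "inj_on \<phi> VF"
        using card_le_inj[OF finVF finC le] by blast
      have "\<forall>e\<in>EF. heavy (card EF) H (\<phi> ` e)"
      proof
        fix e assume "e \<in> EF"
        then have "e \<in> pairs_in VF" using EFsub by auto
        then obtain a b where ab: "e = {a, b}" "a \<noteq> b" "a \<in> VF" "b \<in> VF" using pairs_in_D by blast
        then have "\<phi> a \<noteq> \<phi> b" "\<phi> a \<in> C x" "\<phi> b \<in> C x" using \<phi> by (auto simp: inj_on_def)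
        then show "heavy (card EF) H (\<phi> ` e)"
          using clique[of x "\<phi> a" "\<phi> b"] xh le VF3 ab p_def by auto
      qed
      moreover have "\<phi> ` VF \<subseteq> V" using \<phi> Csub hV by blast
      moreover have "finite EF" using EFsub pairs_in_finite[OF finVF] finite_subset by blast
      ultimately have "berge_copy VF EF V H" using berge_from_heavy \<phi> finH by blast
      then show False using nb by auto
    qed
    ultimately show ?thesis unfolding k_def by auto
  qed
  have finL: "finite L" unfolding L_def using pairs_in_finite[OF finh] by auto
  have kr: "k \<le> r" unfolding k_def by auto
  show ?thesis
  proof (cases "\<exists>x0\<in>h. r - k \<le> card (C x0)")
    case True
    then obtain x0 where x0: "x0 \<in> h" "r - k \<le> card (C x0)" by auto
    let ?g = "\<lambda>(a, b). {a, b}"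
    have inj: "inj_on ?g (C x0 \<times> (h - C x0))"
      by (auto simp: inj_on_def doubleton_eq_iff)
    have img: "?g ` (C x0 \<times> (h - C x0)) \<subseteq> L"
    proof
      fix e assume "e \<in> ?g ` (C x0 \<times> (h - C x0))"
      then obtain a b where "e = {a, b}" "a \<in> C x0" "b \<in> h" "b \<notin> C x0" by auto
      then show "e \<in> L" using closed[of x0 a b] x0 Csub unfolding L_def
        by (auto intro!: pairs_in_doubleton)
    qed
    have "card (C x0 \<times> (h - C x0)) = card (C x0) * (r - card (C x0))"
      by (simp only: card_cartesian_product card_Diff_subset[OF finC Csub] hr)
    then have "card (C x0) * (r - card (C x0)) \<le> card L"
      using card_inj_on_le[OF inj img finL] by auto
    moreover have "k * (r - k) \<le> card (C x0) * (r - card (C x0))"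
      using arith1[of "card (C x0)" k r] Csize[OF x0(1)] x0 kr by auto
    ultimately show ?thesis unfolding k_def L_def by auto
  next
    case False
    define P where "P = (SIGMA x:h. h - C x)"
    have cardP: "card P = (\<Sum>x\<in>h. card (h - C x))"
      unfolding P_def using finh by auto
    have termk: "k \<le> card (h - C x)" "r - k \<le> card (h - C x)" if "x \<in> h" for x
      using False that Csize[OF that] card_Diff_subset[OF finC Csub] hr by auto
    have P1: "r * k \<le> card P" using sum_bounded_below[of h k "\<lambda>x. card (h - C x)"] termk hr cardP
      by auto
    have P2: "r * (r - k) \<le> card P"
      using sum_bounded_below[of h "r - k" "\<lambda>x. card (h - C x)"] termk hr cardP by auto
    let ?F = "\<lambda>e. {(a, b). a \<in> e \<and> b \<in> e \<and> a \<noteq> b}"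
    have PU: "P \<subseteq> (\<Union>e\<in>L. ?F e)"
    proof
      fix q assume "q \<in> P"
      then obtain x y where q: "q = (x, y)" "x \<in> h" "y \<in> h" "y \<notin> C x" unfolding P_def by auto
      then have "x \<noteq> y" using Cself by auto
      moreover have "\<not> heavy 2 H {x, y}" using q unfolding C_def by auto
      ultimately have "{x, y} \<in> L" using q unfolding L_def by (auto intro: pairs_in_doubleton)
      then show "q \<in> (\<Union>e\<in>L. ?F e)" using q \<open>x \<noteq> y\<close> by auto
    qed
    have F2: "card (?F e) \<le> 2" if eL: "e \<in> L" for e
    proof -
      obtain u v where "e = {u, v}" using eL pairs_in_D unfolding L_def by blast
      then have "?F e \<subseteq> {(u, v), (v, u)}" by auto
      moreover have "card {(u, v), (v, u)} \<le> 2" by (rule card2_le)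
      ultimately show ?thesis using card_mono[of "{(u, v), (v, u)}" "?F e"] by auto
    qed
    have finU: "finite (\<Union>e\<in>L. ?F e)"
    proof -
      have "(\<Union>e\<in>L. ?F e) \<subseteq> h \<times> h" unfolding L_def pairs_in_def by auto
      then show ?thesis using finh finite_subset by blast
    qed
    have "card P \<le> card (\<Union>e\<in>L. ?F e)" using card_mono[OF finU PU] .
    also have "\<dots> \<le> (\<Sum>e\<in>L. card (?F e))" using card_UN_le[OF finL] .
    also have "\<dots> \<le> (\<Sum>e\<in>L. 2)" using F2 by (meson sum_mono)
    also have "\<dots> = 2 * card L" by auto
    finally have "card P \<le> 2 * card L" .
    then have "k * (r - k) \<le> card L" using arith2[of r k "card L"] P1 P2 kr by auto
    then show ?thesis unfolding k_def L_def by auto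
  qed
qed


theorem proposition6:
  fixes VF :: "'b set" and EF :: "'b set set"
    and V :: "'a set" and H :: "'a set set" and r :: nat
    and T :: "'a set \<Rightarrow> 'a set"
  assumes "is_graph VF EF" and "card VF \<ge> 2"
    and "r \<ge> 3"
    and "uniform_hypergraph r V H"
    and "\<not> berge_copy VF EF V H"
    and "\<forall>h \<in> H1 H (card EF). good_triangle H (card EF) h (T h)"
  shows "copies VF EF V (G2 H (card EF)) = {} \<and>
    real (card H) \<le> (real (card EF) - 1) * real (num_copies (K_V 3) (K_E 3) V (G1 H (card EF) T))
      + real (num_copies (K_V r) (K_E r) V (G2 H (card EF)))
      + real (card (G3 H (card EF))) /
          real (min (r - 1) (card VF - 1) * (r - min (r - 1) (card VF - 1)))"
proof -
  note graph = assms(1) and VF2 = assms(2) and r3 = assms(3) and unif = assms(4)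
    and nb = assms(5) and Tgood = assms(6)
  define p where "p = card EF"
  define k where "k = min (r - 1) (card VF - 1)"
  have finV: "finite V" using unif unfolding uniform_hypergraph_def by auto
  have HPow: "H \<subseteq> Pow V" using unif unfolding uniform_hypergraph_def by auto
  have finH: "finite H" using finV HPow by (meson finite_Pow_iff finite_subset)
  have finVF: "finite VF" and EFsub: "EF \<subseteq> pairs_in VF"
    using graph unfolding is_graph_def pairs_in_def by auto
  have finEF: "finite EF" using EFsub pairs_in_finite[OF finVF] finite_subset by blast
  have hcard: "h \<in> H \<Longrightarrow> card h = r \<and> h \<subseteq> V" for h using unif unfolding uniform_hypergraph_def by auto
  have finh: "h \<in> H \<Longrightarrow> finite h" for h using hcard finV finite_subset by blast
  have G2heavy: "heavy p H e" if eG: "e \<in> G2 H p" for e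
  proof -
    obtain x y g where "e = {x, y}" "x \<noteq> y" "g \<in> H2 H p" "{x, y} \<subseteq> g"
      using eG unfolding G2_def shadow_def by auto
    then have "e \<in> pairs_in g" unfolding pairs_in_def by auto
    then show ?thesis using \<open>g \<in> H2 H p\<close> unfolding H2_def by auto
  qed
  have G2Pow: "G2 H p \<subseteq> Pow V"
    unfolding G2_def shadow_def H2_def using HPow by auto
  have part1: "copies VF EF V (G2 H p) = {}"
  proof (rule ccontr)
    assume "copies VF EF V (G2 H p) \<noteq> {}"
    then obtain W D \<phi> where c: "W \<subseteq> V" "D \<subseteq> G2 H p" "bij_betw \<phi> VF W" "D = (\<lambda>e. \<phi> ` e) ` EF"
      unfolding copies_def by auto
    have "\<forall>e\<in>EF. heavy (card EF) H (\<phi> ` e)" using c G2heavy p_def by auto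
    moreover have "inj_on \<phi> VF" "\<phi> ` VF \<subseteq> V" using c by (auto simp: bij_betw_def)
    ultimately have "berge_copy VF EF V H" using berge_from_heavy finEF finH by blast
    then show False using nb by auto
  qed
  have c2: "card (H2 H p) \<le> num_copies (K_V r) (K_E r) V (G2 H p)"
  proof -
    have "inj_on (\<lambda>h. (h, pairs_in h)) (H2 H p)" by (auto simp: inj_on_def)
    moreover have "(\<lambda>h. (h, pairs_in h)) ` H2 H p \<subseteq> copies (K_V r) (K_E r) V (G2 H p)"
    proof
      fix q assume "q \<in> (\<lambda>h. (h, pairs_in h)) ` H2 H p"
      then obtain h where h: "h \<in> H2 H p" "q = (h, pairs_in h)" by auto
      then have hH: "h \<in> H" unfolding H2_def by auto
      have "pairs_in h \<subseteq> G2 H p"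
      proof
        fix e assume "e \<in> pairs_in h"
        then obtain x y where "e = {x, y}" "x \<noteq> y" "x \<in> h" "y \<in> h" using pairs_in_D by blast
        then show "e \<in> G2 H p" using h unfolding G2_def shadow_def by blast
      qed
      then show "q \<in> copies (K_V r) (K_E r) V (G2 H p)"
        using Kcopy[of h V r "G2 H p"] h hH hcard finh by auto
    qed
    ultimately show ?thesis unfolding num_copies_def
      by (rule card_inj_on_le[OF _ _ copies_finite[OF finV G2Pow]])
  qed
  have G1Pow: "G1 H p T \<subseteq> Pow V"
  proof
    fix e assume "e \<in> G1 H p T"
    then obtain h where h: "h \<in> H1 H p" "e \<in> pairs_in (T h)" unfolding G1_def by auto
    then have "good_triangle H p h (T h)" using Tgood p_def by auto
    then have "T h \<subseteq> h" unfolding good_triangle_def by auto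
    moreover have "h \<subseteq> V" using h hcard unfolding H1_def by auto
    moreover have "e \<subseteq> T h" using h unfolding pairs_in_def by auto
    ultimately show "e \<in> Pow V" by auto
  qed
  have cT: "card (T ` H1 H p) \<le> num_copies (K_V 3) (K_E 3) V (G1 H p T)"
  proof -
    have "inj_on (\<lambda>t. (t, pairs_in t)) (T ` H1 H p)" by (auto simp: inj_on_def)
    moreover have "(\<lambda>t. (t, pairs_in t)) ` T ` H1 H p \<subseteq> copies (K_V 3) (K_E 3) V (G1 H p T)"
    proof
      fix q assume "q \<in> (\<lambda>t. (t, pairs_in t)) ` T ` H1 H p"
      then obtain h where h: "h \<in> H1 H p" "q = (T h, pairs_in (T h))" by auto
      have g: "good_triangle H p h (T h)" using Tgood h p_def by auto
      have hH: "h \<in> H" using h unfolding H1_def by auto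
      have "T h \<subseteq> V" "card (T h) = 3" using g hcard[OF hH] unfolding good_triangle_def by auto
      moreover have "finite (T h)" using \<open>card (T h) = 3\<close> by (intro card_ge_0_finite) simp
      moreover have "pairs_in (T h) \<subseteq> G1 H p T" using h unfolding G1_def by auto
      ultimately show "q \<in> copies (K_V 3) (K_E 3) V (G1 H p T)"
        using Kcopy[of "T h" V 3 "G1 H p T"] h by auto
    qed
    ultimately show ?thesis unfolding num_copies_def
      by (rule card_inj_on_le[OF _ _ copies_finite[OF finV G1Pow]])
  qed
  have c1: "card (H1 H p) \<le> (p - 1) * card (T ` H1 H p)"
  proof -
    have finH1: "finite (H1 H p)" using finH unfolding H1_def by auto
    have "H1 H p = (\<Union>t\<in>T ` H1 H p. {h \<in> H1 H p. T h = t})" by auto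
    then have "card (H1 H p) \<le> (\<Sum>t\<in>T ` H1 H p. card {h \<in> H1 H p. T h = t})"
      using card_UN_le[of "T ` H1 H p" "\<lambda>t. {h \<in> H1 H p. T h = t}"] finH1 by auto
    also have "\<dots> \<le> (\<Sum>t\<in>T ` H1 H p. p - 1)"
    proof (rule sum_mono)
      fix t assume "t \<in> T ` H1 H p"
      then obtain h0 where h0: "h0 \<in> H1 H p" "t = T h0" by auto
      then have "good_triangle H p h0 t" using Tgood p_def by auto
      then obtain e where e: "e \<in> pairs_in t" "\<not> heavy p H e" unfolding good_triangle_def by auto
      have "{h \<in> H1 H p. T h = t} \<subseteq> {g \<in> H. e \<subseteq> g}"
      proof
        fix h assume h: "h \<in> {h \<in> H1 H p. T h = t}"
        then have "good_triangle H p h t" using Tgood p_def by auto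
        then show "h \<in> {g \<in> H. e \<subseteq> g}" using h e unfolding good_triangle_def pairs_in_def H1_def
          by auto
      qed
      then have "card {h \<in> H1 H p. T h = t} \<le> edge_mult H e"
        unfolding edge_mult_def using finH by (auto intro: card_mono)
      then show "card {h \<in> H1 H p. T h = t} \<le> p - 1" using e unfolding heavy_def by auto
    qed
    also have "\<dots> = (p - 1) * card (T ` H1 H p)" by simp
    finally show ?thesis .
  qed
  have r1: "real (card (H1 H p)) \<le> (real p - 1) * real (num_copies (K_V 3) (K_E 3) V (G1 H p T))"
  proof (cases "p = 0")
    case True
    then have "H1 H p = {}" unfolding H1_def good_triangle_def heavy_def by auto
    then have "G1 H p T = {}" unfolding G1_def by auto
    moreover have "{0, 1} \<in> K_E 3" unfolding K_E_def pairs_in_def by auto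
    ultimately have "copies (K_V 3) (K_E 3) V (G1 H p T) = {}" unfolding copies_def by auto
    then show ?thesis using \<open>H1 H p = {}\<close> unfolding num_copies_def by simp
  next
    case False
    have "card (H1 H p) \<le> (p - 1) * num_copies (K_V 3) (K_E 3) V (G1 H p T)"
      using c1 cT by (meson le_trans mult_le_mono2)
    then have "real (card (H1 H p)) \<le> real (p - 1) * real (num_copies (K_V 3) (K_E 3) V (G1 H p T))"
      by (metis of_nat_le_iff of_nat_mult)
    then show ?thesis using False by (simp add: of_nat_diff)
  qed
  define Lh where "Lh = (\<lambda>h. {e \<in> pairs_in h. \<not> heavy 2 H e})"
  have c3: "card (H3 H p) * (k * (r - k)) \<le> card (G3 H p)"
  proof -
    have finH3: "finite (H3 H p)" using finH unfolding H3_def by auto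
    have eq: "G3 H p = (\<Union>h\<in>H3 H p. Lh h)" unfolding G3_def Lh_def by auto
    have disj: "\<forall>h1\<in>H3 H p. \<forall>h2\<in>H3 H p. h1 \<noteq> h2 \<longrightarrow> Lh h1 \<inter> Lh h2 = {}"
    proof (intro ballI impI)
      fix h1 h2 assume h: "h1 \<in> H3 H p" "h2 \<in> H3 H p" "h1 \<noteq> h2"
      show "Lh h1 \<inter> Lh h2 = {}"
      proof (rule ccontr)
        assume "Lh h1 \<inter> Lh h2 \<noteq> {}"
        then obtain e where e: "e \<in> Lh h1" "e \<in> Lh h2" by auto
        have "{h1, h2} \<subseteq> {g \<in> H. e \<subseteq> g}"
          using e h unfolding Lh_def pairs_in_def H3_def by auto
        then have "card {h1, h2} \<le> edge_mult H e"
          unfolding edge_mult_def using finH by (auto intro: card_mono)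
        then have "heavy 2 H e" using h unfolding heavy_def by auto
        then show False using e unfolding Lh_def by auto
      qed
    qed
    have finL: "\<forall>h\<in>H3 H p. finite (Lh h)"
      unfolding Lh_def H3_def using pairs_in_finite finh by (auto intro: finite_subset[of _ "pairs_in _"])
    have "card (G3 H p) = (\<Sum>h\<in>H3 H p. card (Lh h))"
      unfolding eq using card_UN_disjoint[OF finH3 finL disj] .
    moreover have "\<forall>h\<in>H3 H p. k * (r - k) \<le> card (Lh h)"
      using H3_light[OF graph VF2 r3 unif nb] unfolding Lh_def k_def p_def by auto
    ultimately show ?thesis using sum_bounded_below[of "H3 H p" "k * (r - k)" "\<lambda>h. card (Lh h)"]
      by (simp add: mult.commute)
  qed
  have kpos: "0 < k * (r - k)" unfolding k_def using VF2 r3 by auto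
  have r3': "real (card (H3 H p)) \<le> real (card (G3 H p)) / real (k * (r - k))"
  proof -
    have "real (card (H3 H p)) * real (k * (r - k)) \<le> real (card (G3 H p))"
      using c3 by (metis of_nat_le_iff of_nat_mult)
    then show ?thesis using kpos by (simp add: pos_le_divide_eq)
  qed
  have "H \<subseteq> H1 H p \<union> H2 H p \<union> H3 H p" unfolding H3_def by auto
  then have "card H \<le> card (H1 H p \<union> H2 H p \<union> H3 H p)"
    using finH unfolding H1_def H2_def H3_def by (intro card_mono) auto
  also have "\<dots> \<le> card (H1 H p) + card (H2 H p) + card (H3 H p)"
    by (meson add_le_mono1 card_Un_le le_trans)
  finally have "real (card H) \<le> real (card (H1 H p)) + real (card (H2 H p)) + real (card (H3 H p))"
    by (metis of_nat_add of_nat_le_iff)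
  moreover have h2: "real (card (H2 H p)) \<le> real (num_copies (K_V r) (K_E r) V (G2 H p))"
    using c2 by simp
  have "real (card (H1 H p)) + real (card (H2 H p)) + real (card (H3 H p)) \<le>
      (real p - 1) * real (num_copies (K_V 3) (K_E 3) V (G1 H p T))
      + real (num_copies (K_V r) (K_E r) V (G2 H p))
      + real (card (G3 H p)) / real (k * (r - k))"
    by (intro add_mono r1 h2 r3')
  ultimately have "real (card H) \<le> (real p - 1) * real (num_copies (K_V 3) (K_E 3) V (G1 H p T))
      + real (num_copies (K_V r) (K_E r) V (G2 H p))
      + real (card (G3 H p)) / real (k * (r - k))"
    by (rule order_trans)
  then show ?thesis using part1 unfolding p_def k_def by blast
qed

end
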